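(* Let $(X,\langle\cdot,\cdot\rangle)$ be a real inner product space, $n\ge 2$, and $x,y,x_2,\ldots,x_n\in X$. Then $(x,y\mid x_n,\ldots,x_2)_*=E_n\cdot\langle x,y\mid x_n,\ldots,x_2\rangle$, where $E_2=1$ and, for $n\ge3$, $E_n=\prod_{k=2}^{n-1}\langle x_k,x_k\mid x_{k-1},\ldots,x_2\rangle^{2^{n-k-1}}$.
   Context: The $n$-iterated $2$-inner product is defined recursively: for $n=2$, $(x,y\mid z)_*:=\langle x,y\rangle\langle z,z\rangle-\langle x,z\rangle\langle z,y\rangle$; for $n\ge3$, $(x,y\mid x_n,\ldots,x_2)_*:=(x,y\mid x_{n-1},\ldots,x_2)_*\,(x_n,x_n\mid x_{n-1},\ldots,x_2)_*-(x,x_n\mid x_{n-1},\ldots,x_2)_*\,(x_n,y\mid x_{n-1},\ldots,x_2)_*$. The standard $m$-inner product ($m\ge2$) is $\langle v,w\mid v_2,\ldots,v_m\rangle:=\det(\langle a_i,b_j\rangle)_{1\le i,j\le m}$ with $(a_1,\ldots,a_m)=(v,v_2,\ldots,v_m)$ and $(b_1,\ldots,b_m)=(w,v_2,\ldots,v_m)$; in particular $\langle x,y\mid x_n,\ldots,x_2\rangle$ is the determinant of the matrix with rows indexed by $x,x_n,\ldots,x_2$ and columns indexed by $y,x_n,\ldots,x_2$. By convention, for $m=1$ (the factor $k=2$ in $E_n$), $\langle x_2,x_2\mid x_1,\ldots,x_2\rangle$ means $\langle x_2,x_2\rangle$. *)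

theory Defs
  imports "HOL-Analysis.Inner_Product" "Jordan_Normal_Form.Determinant"
begin

definition std_mip :: "'a::real_inner \<Rightarrow> 'a \<Rightarrow> 'a list \<Rightarrow> real" where
  "std_mip v w vs =
     det (mat (Suc (length vs)) (Suc (length vs))
       (\<lambda>(i, j). inner ((v # vs) ! i) ((w # vs) ! j)))"

text \<open>n-iterated 2-inner product (x, y | x_n, ..., x_2)_*, where the vectors
  x_2, ..., x_n are given by xs 2, ..., xs n.  Meaningful for n \<ge> 2
  (for n < 2 it just returns the n = 2 value).\<close>
function istar :: "'a::real_inner \<Rightarrow> 'a \<Rightarrow> (nat \<Rightarrow> 'a) \<Rightarrow> nat \<Rightarrow> real" where
  "istar x y xs n =
     (if n \<le> 2 then inner x y * inner (xs 2) (xs 2) - inner x (xs 2) * inner (xs 2) y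
      else istar x y xs (n - 1) * istar (xs n) (xs n) xs (n - 1)
           - istar x (xs n) xs (n - 1) * istar (xs n) y xs (n - 1))"
  by pat_completeness auto
termination by (relation "measure (\<lambda>(_, _, _, n). n)") auto

end

theory Submission
  imports Defs
begin


lemma det2: assumes "A \<in> carrier_mat 2 2"
  shows "det A = A$$(0,0)*A$$(1,1) - A$$(0,1)*A$$(1,0)"
proof -
  have "det A = (\<Sum>j<2. A $$ (0,j) * cofactor A 0 j)"
    by (rule laplace_expansion_row[OF assms], simp)
  also have "\<dots> = A $$ (0,0) * cofactor A 0 0 + A $$ (0,1) * cofactor A 0 1"
    by (simp add: numeral_2_eq_2)
  also have "cofactor A 0 0 = A$$(1,1)" unfolding cofactor_def
    using assms by (subst det_single, auto simp: mat_delete_def)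
  also have "cofactor A 0 1 = - A$$(1,0)" unfolding cofactor_def
    using assms by (subst det_single, auto simp: mat_delete_def)
  finally show ?thesis by simp
qed

lemma minus_plus_mat: "A \<in> carrier_mat n k \<Longrightarrow> X \<in> carrier_mat n k \<Longrightarrow> (A - X) + X = (A :: 'a :: ab_group_add mat)"
  by (intro eq_matI) auto

lemma det_schur:
  fixes A :: "'b::field mat"
  assumes A: "A \<in> carrier_mat n n" and B: "B \<in> carrier_mat n m" and C: "C \<in> carrier_mat m n"
    and D: "D \<in> carrier_mat m m" and Di: "Di \<in> carrier_mat m m" and DDi: "Di * D = 1\<^sub>m m"
  shows "det (four_block_mat A B C D) = det D * det (A - B * Di * C)"
proof -
  have BDi: "B * Di \<in> carrier_mat n m" using B Di by auto
  have S: "A - B * Di * C \<in> carrier_mat n n" using A B Di C by auto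
  have eq: "four_block_mat A B C D = four_block_mat (1\<^sub>m n) (B * Di) (0\<^sub>m m n) (1\<^sub>m m) *
     four_block_mat (A - B * Di * C) (0\<^sub>m n m) C D"
  proof -
    have e1: "1\<^sub>m n * (A - B * Di * C) + B * Di * C = A"
    proof -
      have X: "B * Di * C \<in> carrier_mat n n" using BDi C by auto
      show ?thesis unfolding left_mult_one_mat[OF S] by (rule minus_plus_mat[OF A X])
    qed
    have e2: "1\<^sub>m n * 0\<^sub>m n m + B * Di * D = B"
      unfolding assoc_mult_mat[OF B Di D] DDi right_mult_one_mat[OF B] left_mult_one_mat[OF zero_carrier_mat]
      using B by simp
    have e3: "0\<^sub>m m n * (A - B * Di * C) + 1\<^sub>m m * C = C" unfolding left_mult_zero_mat[OF S] left_mult_one_mat[OF C] using C by simp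
    have e4: "0\<^sub>m m n * 0\<^sub>m n m + 1\<^sub>m m * D = D" using D by (simp only: left_mult_zero_mat[OF zero_carrier_mat] left_mult_one_mat[OF D] left_add_zero_mat[OF D])
    show ?thesis
      by (subst mult_four_block_mat[OF one_carrier_mat BDi zero_carrier_mat one_carrier_mat S zero_carrier_mat C D])
         (simp only: e1 e2 e3 e4)
  qed
  have "det (four_block_mat A B C D) = det (four_block_mat (1\<^sub>m n) (B * Di) (0\<^sub>m m n) (1\<^sub>m m)) *
     det (four_block_mat (A - B * Di * C) (0\<^sub>m n m) C D)"
    unfolding eq by (rule det_mult[of _ "n+m"], insert BDi S C D, auto intro!: four_block_carrier_mat)
  also have "det (four_block_mat (1\<^sub>m n) (B * Di) (0\<^sub>m m n) (1\<^sub>m m)) = 1"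
    by (subst det_four_block_mat_lower_left_zero[OF one_carrier_mat BDi refl one_carrier_mat], simp)
  also have "det (four_block_mat (A - B * Di * C) (0\<^sub>m n m) C D) = det (A - B * Di * C) * det D"
    by (rule det_four_block_mat_upper_right_zero[OF S refl C D])
  finally show ?thesis by simp
qed

definition gram :: "'a::real_inner list \<Rightarrow> real mat" where
  "gram vs = mat (length vs) (length vs) (\<lambda>(i,j). inner (vs!i) (vs!j))"

lemma gram_carrier[simp]: "gram vs \<in> carrier_mat (length vs) (length vs)"
  unfolding gram_def by auto

lemma gram_std: "std_mip v v rest = det (gram (v # rest))"
  unfolding std_mip_def gram_def by simp

definition sf :: "'a::real_inner list \<Rightarrow> real mat \<Rightarrow> 'a \<Rightarrow> 'a \<Rightarrow> real" where
  "sf vs Di a b = inner a b - (\<Sum>k<length vs. \<Sum>l<length vs. inner a (vs!k) * Di$$(k,l) * inner (vs!l) b)"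

lemma mult3_entry:
  fixes P :: "'b::comm_semiring_1 mat"
  assumes P: "P \<in> carrier_mat p m" and Q: "Q \<in> carrier_mat m m" and R: "R \<in> carrier_mat m q"
    and i: "i < p" and j: "j < q"
  shows "(P * Q * R) $$ (i,j) = (\<Sum>k<m. \<Sum>l<m. P$$(i,k) * Q$$(k,l) * R$$(l,j))"
proof -
  have "(P * Q * R) $$ (i,j) = (\<Sum>k<m. P$$(i,k) * (\<Sum>l<m. Q$$(k,l) * R$$(l,j)))"
    using P Q R i j by (simp add: scalar_prod_def lessThan_atLeast0)
  also have "\<dots> = (\<Sum>k<m. \<Sum>l<m. P$$(i,k) * Q$$(k,l) * R$$(l,j))"
    by (simp add: sum_distrib_left mult.assoc)
  finally show ?thesis .
qed

lemma block_gen: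
  fixes vs :: "'a::real_inner list"
  assumes us: "length us = k" and ws: "length ws = k"
    and Di: "Di \<in> carrier_mat (length vs) (length vs)" and DDi: "Di * gram vs = 1\<^sub>m (length vs)"
  shows "det (mat (k + length vs) (k + length vs) (\<lambda>(i,j). inner ((us @ vs)!i) ((ws @ vs)!j)))
    = det (gram vs) * det (mat k k (\<lambda>(i,j). sf vs Di (us!i) (ws!j)))"
proof -
  let ?m = "length vs"
  let ?A = "mat k k (\<lambda>(i,j). inner (us!i) (ws!j))"
  let ?B = "mat k ?m (\<lambda>(i,j). inner (us!i) (vs!j))"
  let ?C = "mat ?m k (\<lambda>(i,j). inner (vs!i) (ws!j))"
  have eq: "mat (k + ?m) (k + ?m) (\<lambda>(i,j). inner ((us @ vs)!i) ((ws @ vs)!j))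
     = four_block_mat ?A ?B ?C (gram vs)"
    by (rule eq_matI, insert us ws, auto simp: nth_append gram_def)
  have eq2: "?A - ?B * Di * ?C = mat k k (\<lambda>(i,j). sf vs Di (us!i) (ws!j))"
  proof (rule eq_matI)
    fix i j assume i: "i < dim_row (mat k k (\<lambda>(i,j). sf vs Di (us!i) (ws!j)))"
      and j: "j < dim_col (mat k k (\<lambda>(i,j). sf vs Di (us!i) (ws!j)))"
    have "(?B * Di * ?C) $$ (i,j) = (\<Sum>ka<?m. \<Sum>l<?m. ?B$$(i,ka) * Di$$(ka,l) * ?C$$(l,j))"
      by (rule mult3_entry[OF _ Di], insert i j, auto)
    also have "\<dots> = (\<Sum>ka<?m. \<Sum>l<?m. inner (us!i) (vs!ka) * Di$$(ka,l) * inner (vs!l) (ws!j))"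
      using i j by auto
    finally show "(?A - ?B * Di * ?C) $$ (i,j) = mat k k (\<lambda>(i,j). sf vs Di (us!i) (ws!j)) $$ (i,j)"
      using i j Di by (simp add: sf_def)
  qed (insert Di, auto)
  show ?thesis unfolding eq
    by (subst det_schur[OF _ _ _ gram_carrier Di DDi], auto simp: eq2)
qed

lemma sing:
  fixes vs :: "'a::real_inner list"
  assumes d: "det (gram vs) = 0"
  shows "std_mip a b vs = 0"
proof -
  let ?m = "length vs"
  obtain v where v: "v \<in> carrier_vec ?m" "v \<noteq> 0\<^sub>v ?m" "gram vs *\<^sub>v v = 0\<^sub>v ?m"
    using det_0_iff_vec_prod_zero[OF gram_carrier] d by blast
  have hv: "(\<Sum>j<?m. inner (vs!i) (vs!j) * v$j) = 0" if i: "i < ?m" for i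
  proof -
    have "(gram vs *\<^sub>v v) $ i = 0" using v(3) i by simp
    thus ?thesis using i v(1) by (simp add: gram_def scalar_prod_def lessThan_atLeast0)
  qed
  define w where "w = (\<Sum>j<?m. v$j *\<^sub>R vs!j)"
  have hw: "inner (vs!i) w = 0" if i: "i < ?m" for i
    using hv[OF i] unfolding w_def by (simp add: inner_sum_right mult.commute)
  have "inner w w = (\<Sum>j<?m. v$j * inner (vs!j) w)"
    unfolding w_def[of] by (simp add: inner_sum_left)
  also have "\<dots> = 0" using hw by simp
  finally have w0: "w = 0" by simp
  obtain i0 where i0: "i0 < ?m" "v $ i0 \<noteq> 0"
    using v(1,2) by (metis eq_vecI carrier_vecD index_zero_vec(1) index_zero_vec(2))
  let ?M = "mat (Suc ?m) (Suc ?m) (\<lambda>(i, j). inner ((a # vs) ! i) ((b # vs) ! j))"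
  define u where "u = vec (Suc ?m) (\<lambda>i. if i = 0 then 0 else v$(i-1))"
  have uc: "u \<in> carrier_vec (Suc ?m)" unfolding u_def by simp
  have un: "u \<noteq> 0\<^sub>v (Suc ?m)"
  proof
    assume "u = 0\<^sub>v (Suc ?m)"
    hence "u $ (Suc i0) = 0" using i0 by simp
    thus False using i0 unfolding u_def by simp
  qed
  have Mu: "transpose_mat ?M *\<^sub>v u = 0\<^sub>v (Suc ?m)"
  proof (rule eq_vecI)
    fix j assume j: "j < dim_vec (0\<^sub>v (Suc ?m))"
    have "(transpose_mat ?M *\<^sub>v u) $ j = (\<Sum>i<Suc ?m. inner ((a # vs) ! i) ((b # vs) ! j) * u$i)"
      using j unfolding u_def by (simp add: scalar_prod_def lessThan_atLeast0)
    also have "\<dots> = (\<Sum>i<?m. inner (vs ! i) ((b # vs) ! j) * v$i)"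
      by (subst sum.lessThan_Suc_shift, simp add: u_def)
    also have "\<dots> = inner w ((b # vs) ! j)"
      unfolding w_def by (simp add: inner_sum_left mult.commute)
    also have "\<dots> = 0" using w0 by simp
    finally show "(transpose_mat ?M *\<^sub>v u) $ j = 0\<^sub>v (Suc ?m) $ j" using j by simp
  qed simp
  have Mc: "?M \<in> carrier_mat (Suc ?m) (Suc ?m)" by simp
  have "det (transpose_mat ?M) = 0"
    using det_0_iff_vec_prod_zero[of "transpose_mat ?M" "Suc ?m"] Mc uc un Mu by auto
  thus ?thesis unfolding std_mip_def det_transpose[OF Mc] .
qed

lemma KL:
  fixes vs :: "'a::real_inner list"
  shows "std_mip x y vs * std_mip z z vs - std_mip x z vs * std_mip z y vs
    = det (gram vs) * std_mip x y (z # vs)"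
proof (cases "det (gram vs) = 0")
  case True
  thus ?thesis using sing[OF True] by simp
next
  case False
  let ?m = "length vs"
  from det_non_zero_imp_unit[OF gram_carrier False, of "()"]
  obtain Di where Di: "Di \<in> carrier_mat ?m ?m" "Di * gram vs = 1\<^sub>m ?m"
    unfolding Units_def ring_mat_def by auto
  have G1: "std_mip a b vs = det (gram vs) * sf vs Di a b" for a b
  proof -
    have "std_mip a b vs = det (mat (1 + ?m) (1 + ?m) (\<lambda>(i,j). inner (([a] @ vs)!i) (([b] @ vs)!j)))"
      by (simp add: std_mip_def)
    also have "\<dots> = det (gram vs) * det (mat 1 1 (\<lambda>(i,j). sf vs Di ([a]!i) ([b]!j)))"
      by (rule block_gen[OF _ _ Di], auto)
    also have "det (mat 1 1 (\<lambda>(i,j). sf vs Di ([a]!i) ([b]!j))) = sf vs Di a b"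
      by (subst det_single, auto)
    finally show ?thesis .
  qed
  have G2: "std_mip x y (z # vs) = det (gram vs) * (sf vs Di x y * sf vs Di z z - sf vs Di x z * sf vs Di z y)"
  proof -
    have "std_mip x y (z # vs) = det (mat (2 + ?m) (2 + ?m) (\<lambda>(i,j). inner (([x,z] @ vs)!i) (([y,z] @ vs)!j)))"
      by (simp add: std_mip_def)
    also have "\<dots> = det (gram vs) * det (mat 2 2 (\<lambda>(i,j). sf vs Di ([x,z]!i) ([y,z]!j)))"
      by (rule block_gen[OF _ _ Di], auto)
    also have "det (mat 2 2 (\<lambda>(i,j). sf vs Di ([x,z]!i) ([y,z]!j))) = sf vs Di x y * sf vs Di z z - sf vs Di x z * sf vs Di z y"
      by (subst det2, auto)
    finally show ?thesis .
  qed
  show ?thesis unfolding G1 G2 by (simp add: algebra_simps)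
qed

lemma main:
  fixes xs :: "nat \<Rightarrow> 'a::real_inner"
  assumes "n \<ge> 2"
  shows "\<forall>x y. istar x y xs n =
    (\<Prod>k\<in>{2..n-1}. std_mip (xs k) (xs k) (map xs (rev [2..<k])) ^ (2 ^ (n - k - 1)))
    * std_mip x y (map xs (rev [2..<Suc n]))"
  using assms
proof (induction n rule: nat_induct_at_least)
  case base
  show ?case
  proof (intro allI)
    fix x y :: 'a
    have "std_mip x y (map xs (rev [2..<Suc 2])) = det (mat 2 2 (\<lambda>(i,j). inner ([x, xs 2]!i) ([y, xs 2]!j)))"
      by (simp add: std_mip_def numeral_2_eq_2)
    also have "\<dots> = inner x y * inner (xs 2) (xs 2) - inner x (xs 2) * inner (xs 2) y"
      by (subst det2, auto)
    finally show "istar x y xs 2 = (\<Prod>k\<in>{2..2-1}. std_mip (xs k) (xs k) (map xs (rev [2..<k])) ^ (2 ^ (2 - k - 1)))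
      * std_mip x y (map xs (rev [2..<Suc 2]))"
      by simp
  qed
next
  case (Suc n)
  define f where "f k = std_mip (xs k) (xs k) (map xs (rev [2..<k]))" for k
  define E where "E = (\<Prod>k\<in>{2..n-1}. f k ^ (2 ^ (n - k - 1)))"
  define P where "P = map xs (rev [2..<Suc n])"
  have IH: "istar a b xs n = E * std_mip a b P" for a b
    using Suc.IH unfolding E_def P_def f_def by blast
  have P2: "P = xs n # map xs (rev [2..<n])" unfolding P_def using Suc.hyps by simp
  have PS: "map xs (rev [2..<Suc (Suc n)]) = xs (Suc n) # P" unfolding P_def using Suc.hyps by simp
  have dg: "det (gram P) = f n" unfolding P2 f_def gram_std ..
  have ES: "(\<Prod>k\<in>{2..Suc n-1}. f k ^ (2 ^ (Suc n - k - 1))) = E^2 * f n"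
  proof -
    have s: "{2..Suc n - 1} = insert n {2..n-1}" using Suc.hyps by auto
    have "(\<Prod>k\<in>{2..Suc n-1}. f k ^ (2 ^ (Suc n - k - 1))) = f n * (\<Prod>k\<in>{2..n-1}. f k ^ (2 ^ (Suc n - k - 1)))"
      unfolding s using Suc.hyps by (subst prod.insert, auto)
    also have "(\<Prod>k\<in>{2..n-1}. f k ^ (2 ^ (Suc n - k - 1))) = (\<Prod>k\<in>{2..n-1}. (f k ^ (2 ^ (n - k - 1)))^2)"
    proof (rule prod.cong[OF refl])
      fix k assume "k \<in> {2..n-1}"
      hence "Suc n - k - 1 = Suc (n - k - 1)" by auto
      thus "f k ^ (2 ^ (Suc n - k - 1)) = (f k ^ (2 ^ (n - k - 1)))^2"
        by (simp add: power_mult[symmetric] mult.commute)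
    qed
    also have "\<dots> = E^2" unfolding E_def by (simp add: prod_power_distrib)
    finally show ?thesis by simp
  qed
  show ?case
  proof (intro allI)
    fix x y :: 'a
    let ?z = "xs (Suc n)"
    have "istar x y xs (Suc n) = istar x y xs n * istar ?z ?z xs n - istar x ?z xs n * istar ?z y xs n"
      using Suc.hyps by (subst istar.simps, simp)
    also have "\<dots> = E^2 * (std_mip x y P * std_mip ?z ?z P - std_mip x ?z P * std_mip ?z y P)"
      unfolding IH by (simp add: algebra_simps power2_eq_square)
    also have "\<dots> = E^2 * f n * std_mip x y (?z # P)"
      unfolding KL dg by simp
    finally show "istar x y xs (Suc n) = (\<Prod>k\<in>{2..Suc n-1}. std_mip (xs k) (xs k) (map xs (rev [2..<k])) ^ (2 ^ (Suc n - k - 1)))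
      * std_mip x y (map xs (rev [2..<Suc (Suc n)]))"
      using ES unfolding PS f_def by simp
  qed
qed


theorem theorem3p1:
  fixes x y :: "'a::real_inner" and xs :: "nat \<Rightarrow> 'a" and n :: nat
  assumes "n \<ge> 2"
  shows "istar x y xs n =
    (\<Prod>k\<in>{2..n-1}. std_mip (xs k) (xs k) (map xs (rev [2..<k])) ^ (2 ^ (n - k - 1)))
    * std_mip x y (map xs (rev [2..<Suc n]))"
  using main[OF assms] by blast

end
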